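(* For all constants $K_1,K_2>0$ there is a constant $c=c(K_1,K_2)>0$ such that the following holds. Let $A$ be a set of $N$ positive integers and let $g=\gcd(A)$ be the greatest common divisor of all elements of $A$. Suppose that $a/g<N^{K_1}$ for every $a\in A$, that $A\subseteq B.B=\{bb': b,b'\in B\}$ for some finite set $B$ of integers, and that $$\omega\Big(\prod_{a\in A}\frac{a}{g},\,K_2N\Big)\ge M.$$ Then $|B|\ge cM$.
   Context: For a natural number $m$ and a real number $x$, $\omega(m,x)$ denotes the number of distinct prime factors $p$ of $m$ with $p\ge x$. *)

theory Defs
  imports "HOL-Computational_Algebra.Primes" Complex_Main
begin

definition omega :: "nat \<Rightarrow> real \<Rightarrow> nat" where
  "omega m x = card {p \<in> prime_factors m. real p \<ge> x}"

end

theory Submission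
  imports Defs "HOL-Library.Function_Algebras"
begin


definition fscale :: "real \<Rightarrow> (int \<Rightarrow> real) \<Rightarrow> (int \<Rightarrow> real)" where
  "fscale c h = (\<lambda>z. c * h z)"

interpretation fv: vector_space fscale
  by unfold_locales (auto simp: fscale_def fun_eq_iff algebra_simps)

definition dl :: "int \<Rightarrow> int \<Rightarrow> real" where
  "dl x = (\<lambda>z. if z = x then 1 else 0)"

definition evec :: "int \<times> int \<Rightarrow> int \<Rightarrow> real" where
  "evec e = dl (fst e) + dl (snd e)"

definition LL :: "int set \<Rightarrow> (int \<Rightarrow> real) \<Rightarrow> real \<Rightarrow> (int \<Rightarrow> real) \<Rightarrow> real" where
  "LL B f \<nu> h = (\<Sum>z\<in>B. h z * f z) - \<nu> / 2 * (\<Sum>z\<in>B. h z)"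

lemma sum_dl: "(\<Sum>z\<in>B. dl x z * f z) = f x" if "finite B" "x \<in> B"
proof -
  have "(\<Sum>z\<in>B. dl x z * f z) = (\<Sum>z\<in>B. if z = x then f z else 0)"
    by (rule sum.cong) (auto simp: dl_def)
  then show ?thesis using that by (simp add: sum.delta')
qed

lemma sum_dl1: "finite B \<Longrightarrow> x \<in> B \<Longrightarrow> (\<Sum>z\<in>B. dl x z) = 1"
  by (simp add: dl_def sum.delta')

lemma LL_evec: "finite B \<Longrightarrow> fst e \<in> B \<Longrightarrow> snd e \<in> B \<Longrightarrow>
  LL B f \<nu> (evec e) = f (fst e) + f (snd e) - \<nu>"
  by (simp add: LL_def evec_def distrib_right sum.distrib sum_dl sum_dl1)

lemma LL_span:
  assumes "finite B" "h \<in> fv.span S" "\<forall>s\<in>S. LL B f \<nu> s = 0"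
  shows "LL B f \<nu> h = 0"
  using assms(2)
proof (induction rule: fv.span_induct)
  case base
  show ?case unfolding fv.subspace_def
    by (auto simp: LL_def fscale_def algebra_simps sum.distrib sum_distrib_left[symmetric])
next
  case (step x) then show ?case using assms(3) by auto
qed

lemma edge_basis:
  fixes B :: "int set" and E :: "'e set" and ends :: "'e \<Rightarrow> int \<times> int"
  assumes fB: "finite B" and ends: "\<forall>e\<in>E. fst (ends e) \<in> B \<and> snd (ends e) \<in> B"
  shows "\<exists>E0 \<subseteq> E. card E0 \<le> card B \<and> finite E0 \<and> (\<forall>f::int\<Rightarrow>real. \<forall>\<nu>.
     (\<forall>e\<in>E0. f (fst (ends e)) + f (snd (ends e)) = \<nu>) \<longrightarrow>
     (\<forall>e\<in>E. f (fst (ends e)) + f (snd (ends e)) = \<nu>))"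
proof -
  define S where "S = (evec \<circ> ends) ` E"
  obtain Bv where Bv: "Bv \<subseteq> S" "fv.independent Bv" "S \<subseteq> fv.span Bv"
    using fv.maximal_independent_subset by blast
  define T where "T = dl ` B"
  have "S \<subseteq> fv.span T"
  proof
    fix s assume "s \<in> S"
    then obtain e where e: "e \<in> E" "s = evec (ends e)" unfolding S_def by auto
    have "dl (fst (ends e)) \<in> fv.span T" "dl (snd (ends e)) \<in> fv.span T"
      using ends e(1) unfolding T_def by (auto intro: fv.span_base)
    then show "s \<in> fv.span T" using e by (simp add: evec_def fv.span_add)
  qed
  then have "finite Bv \<and> card Bv \<le> card T"
    using fv.independent_span_bound[of T Bv] Bv fB unfolding T_def by auto
  moreover have "card T \<le> card B" unfolding T_def using fB by (rule card_image_le)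
  ultimately have cBv: "finite Bv" "card Bv \<le> card B" by auto
  define pick where "pick v = (SOME e. e \<in> E \<and> evec (ends e) = v)" for v
  have pick: "pick v \<in> E \<and> evec (ends (pick v)) = v" if "v \<in> Bv" for v
  proof -
    have "\<exists>e. e \<in> E \<and> evec (ends e) = v" using that Bv(1) unfolding S_def by auto
    then show ?thesis unfolding pick_def by (rule someI_ex)
  qed
  define E0 where "E0 = pick ` Bv"
  have "E0 \<subseteq> E" using pick unfolding E0_def by auto
  moreover have "card E0 \<le> card B" unfolding E0_def using card_image_le[OF cBv(1), of pick] cBv(2) by linarith
  moreover have "finite E0" unfolding E0_def using cBv by auto
  moreover have "\<forall>e\<in>E. f (fst (ends e)) + f (snd (ends e)) = \<nu>"
    if H: "\<forall>e\<in>E0. f (fst (ends e)) + f (snd (ends e)) = \<nu>" for f :: "int \<Rightarrow> real" and \<nu>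
  proof
    fix e assume e: "e \<in> E"
    have "\<forall>s\<in>Bv. LL B f \<nu> s = 0"
    proof
      fix s assume s: "s \<in> Bv"
      have "pick s \<in> E0" using s unfolding E0_def by auto
      then have "f (fst (ends (pick s))) + f (snd (ends (pick s))) = \<nu>" using H by auto
      moreover have "LL B f \<nu> s = f (fst (ends (pick s))) + f (snd (ends (pick s))) - \<nu>"
        using pick[OF s] LL_evec[OF fB, of "ends (pick s)" f \<nu>] ends by auto
      ultimately show "LL B f \<nu> s = 0" by simp
    qed
    moreover have "evec (ends e) \<in> fv.span Bv" using Bv(3) e unfolding S_def by auto
    ultimately have "LL B f \<nu> (evec (ends e)) = 0" using LL_span[OF fB] by blast
    then show "f (fst (ends e)) + f (snd (ends e)) = \<nu>"
      using LL_evec[OF fB, of "ends e" f \<nu>] ends e by auto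
  qed
  ultimately show ?thesis by blast
qed



lemma prod_Q_le:
  fixes m :: nat and Q :: "nat set"
  assumes "m > 0" "Q \<subseteq> prime_factors m"
  shows "\<Prod>Q \<le> m"
proof -
  have fin: "finite (prime_factors m)" by simp
  have "\<Prod>Q dvd (\<Prod>p\<in>prime_factors m. p)"
    using assms(2) fin by (simp add: prod_dvd_prod_subset)
  also have "(\<Prod>p\<in>prime_factors m. p) dvd (\<Prod>p \<in> prime_factors m. p ^ multiplicity p m)"
  proof (rule prod_dvd_prod)
    fix p assume "p \<in> prime_factors m"
    then have "multiplicity p m > 0" using assms(1)
      by (simp add: prime_factors_multiplicity)
    then show "p dvd p ^ multiplicity p m" by (simp add: dvd_power)
  qed
  also have "\<dots> = m" using prime_factorization_nat[OF assms(1)] by simp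
  finally show ?thesis using assms(1) by (simp add: dvd_imp_le)
qed

lemma omega_le:
  fixes m :: nat and x y :: real
  assumes "m > 0" "y > 0" "\<And>p. prime p \<Longrightarrow> real p \<ge> x \<Longrightarrow> real p \<ge> y"
  shows "y ^ omega m x \<le> real m"
proof -
  define Q where "Q = {p \<in> prime_factors m. real p \<ge> x}"
  have fQ: "finite Q" unfolding Q_def by simp
  have "y ^ omega m x = (\<Prod>p\<in>Q. y)" unfolding omega_def Q_def by simp
  also have "\<dots> \<le> (\<Prod>p\<in>Q. real p)"
    by (rule prod_mono) (use assms(2,3) in \<open>auto simp: Q_def in_prime_factors_iff\<close>)
  also have "\<dots> = real (\<Prod>Q)" by simp
  also have "\<dots> \<le> real m"
  proof -
    have "\<Prod>Q \<le> m" using prod_Q_le[OF assms(1), of Q] unfolding Q_def by auto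
    then show ?thesis by (simp only: of_nat_le_iff)
  qed
  finally show ?thesis .
qed

lemma omega_bound:
  fixes K1 K2 :: real
  assumes "K1 > 0" "K2 > 0"
  shows "\<exists>C>0. \<forall>(N::nat) (m::nat). m \<ge> 1 \<longrightarrow> real m < real N powr K1 \<longrightarrow>
           real (omega m (K2 * real N)) \<le> C"
proof -
  define C where "C = 2 * K1 + K1 * \<bar>ln (1 / K2^2)\<bar> / ln 2 + 1"
  have C0: "C > 0" unfolding C_def using assms by (auto intro!: add_nonneg_pos)
  have "real (omega m (K2 * real N)) \<le> C" if m1: "m \<ge> 1" and mN: "real m < real N powr K1" for N m
  proof -
    define t where "t = omega m (K2 * real N)"
    have N0: "N \<noteq> 0"
    proof
      assume "N = 0" with mN show False by simp
    qed
    have "real N \<noteq> 1" using mN m1 by auto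
    with N0 have N2: "real N > 1" by linarith
    have lnm: "ln (real m) < K1 * ln (real N)"
    proof -
      have "ln (real m) < ln (real N powr K1)"
        using mN m1 N2 by (subst ln_less_cancel_iff) auto
      also have "\<dots> = K1 * ln (real N)" using N2 by (simp add: ln_powr)
      finally show ?thesis .
    qed
    show ?thesis
    proof (cases "real N \<ge> 1 / K2^2")
      case True
      define y where "y = K2 * real N"
      have y0: "y > 0" unfolding y_def using assms N2 by simp
      have yp: "y ^ t \<le> real m" unfolding t_def
        by (rule omega_le) (use m1 y0 in \<open>simp_all add: y_def\<close>)
      have "ln (y ^ t) \<le> ln (real m)"
        using yp y0 m1 by (subst ln_le_cancel_iff) simp_all
      moreover have "ln (y ^ t) = real t * ln y" using y0 by (simp add: ln_realpow)
      ultimately have h1: "real t * ln y < K1 * ln (real N)" using lnm by linarith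
      have l1: "ln y = ln K2 + ln (real N)" unfolding y_def using assms N2 by (simp add: ln_mult)
      have l2: "ln (1 / K2^2) \<le> ln (real N)"
        using True assms N2 by (subst ln_le_cancel_iff) simp_all
      have l3: "ln (1/K2^2) = - 2 * ln K2" using assms by (simp add: ln_div ln_realpow)
      from l1 l2 l3 have "ln y \<ge> ln (real N) / 2" by linarith
      then have "real t * (ln (real N) / 2) \<le> real t * ln y" by (rule mult_left_mono) simp
      with h1 have h2: "(real t / 2) * ln (real N) < K1 * ln (real N)" by simp
      have lnN: "ln (real N) > 0" using N2 by simp
      have "real t / 2 < K1"
        using h2 lnN by (meson mult_right_less_imp_less less_imp_le)
      then have "real t < 2 * K1" by simp
      moreover have "K1 * \<bar>ln (1 / K2^2)\<bar> / ln 2 \<ge> 0" using assms by simp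
      ultimately show ?thesis unfolding C_def t_def by linarith
    next
      case False
      have "2 ^ t \<le> real m" unfolding t_def
        by (rule omega_le) (use m1 in \<open>auto dest: prime_ge_2_nat\<close>)
      then have "ln (2 ^ t) \<le> ln (real m)" using m1 by (subst ln_le_cancel_iff) auto
      then have h1: "real t * ln 2 < K1 * ln (real N)" using lnm by (simp add: ln_realpow)
      have "ln (real N) \<le> ln (1/K2^2)" using False N2 assms by (subst ln_le_cancel_iff) auto
      then have "K1 * ln (real N) \<le> K1 * \<bar>ln (1/K2^2)\<bar>" using assms
        by (intro mult_left_mono) auto
      with h1 have "real t * ln 2 < K1 * \<bar>ln (1/K2^2)\<bar>" by linarith
      then have "real t < K1 * \<bar>ln (1/K2^2)\<bar> / ln 2" by (simp add: field_simps)
      then show ?thesis unfolding C_def t_def using assms by linarith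
    qed
  qed
  with C0 show ?thesis by blast
qed


theorem proposition1:
  fixes K1 K2 :: real
  assumes "K1 > 0" and "K2 > 0"
  shows "\<exists>c::real. c > 0 \<and>
    (\<forall>(A::int set) (B::int set) (N::nat) (M::real).
       finite A \<longrightarrow> card A = N \<longrightarrow> (\<forall>a\<in>A. a > 0) \<longrightarrow>
       (\<forall>a\<in>A. real_of_int a / real_of_int (Gcd A) < real N powr K1) \<longrightarrow>
       finite B \<longrightarrow> A \<subseteq> {b * b' | b b'. b \<in> B \<and> b' \<in> B} \<longrightarrow>
       real (omega (\<Prod>a\<in>A. nat (a div Gcd A)) (K2 * real N)) \<ge> M \<longrightarrow>
       real (card B) \<ge> c * M)"
proof -
  obtain C where C0: "C > 0" and Cb: "\<And>N m. m \<ge> 1 \<Longrightarrow> real m < real N powr K1 \<Longrightarrow>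
           real (omega m (K2 * real N)) \<le> C"
    using omega_bound[OF assms] by blast
  show ?thesis
  proof (intro exI[of _ "1/C"] conjI allI impI)
    show "1/C > 0" using C0 by simp
    fix A B :: "int set" and N :: nat and M :: real
    assume fA: "finite A" and cA: "card A = N" and pos: "\<forall>a\<in>A. a > 0"
      and bnd: "\<forall>a\<in>A. real_of_int a / real_of_int (Gcd A) < real N powr K1"
      and fB: "finite B" and sub: "A \<subseteq> {b * b' | b b'. b \<in> B \<and> b' \<in> B}"
      and om: "real (omega (\<Prod>a\<in>A. nat (a div Gcd A)) (K2 * real N)) \<ge> M"
    define g where "g = Gcd A"
    define x where "x = K2 * real N"
    define Pr where "Pr = {p \<in> prime_factors (\<Prod>a\<in>A. nat (a div g)). real p \<ge> x}"
    define F where "F a = {p \<in> prime_factors (nat (a div g)). real p \<ge> x}" for a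
    define ends where "ends a = (SOME e. fst e \<in> B \<and> snd e \<in> B \<and> a = fst e * snd e)" for a
    have ends: "fst (ends a) \<in> B \<and> snd (ends a) \<in> B \<and> a = fst (ends a) * snd (ends a)"
      if "a \<in> A" for a
    proof -
      have "\<exists>e. fst e \<in> B \<and> snd e \<in> B \<and> a = fst e * snd e" using sub that by fastforce
      then show ?thesis unfolding ends_def by (rule someI_ex)
    qed
    obtain A0 where A0: "A0 \<subseteq> A" "card A0 \<le> card B" "finite A0"
      and tight: "\<And>f::int\<Rightarrow>real. \<And>\<nu>. (\<forall>e\<in>A0. f (fst (ends e)) + f (snd (ends e)) = \<nu>) \<Longrightarrow>
         (\<forall>e\<in>A. f (fst (ends e)) + f (snd (ends e)) = \<nu>)"
      using edge_basis[OF fB, of A ends] ends by blast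
    have gdvd: "g dvd a" if "a \<in> A" for a unfolding g_def using that by simp
    have gpos: "g > 0" if "A \<noteq> {}"
    proof -
      have "g \<ge> 0" unfolding g_def by simp
      moreover have "g \<noteq> 0" unfolding g_def using that pos by auto
      ultimately show ?thesis by simp
    qed
    have qpos: "a div g > 0" if "a \<in> A" for a
    proof -
      have "g > 0" using gpos that by auto
      moreover have "a = g * (a div g)" using gdvd[OF that] by simp
      ultimately show ?thesis using pos that by (metis zero_less_mult_pos)
    qed
    have Fb: "real (card (F a)) \<le> C" if "a \<in> A" for a
    proof -
      have "card (F a) = omega (nat (a div g)) x" unfolding F_def omega_def by simp
      moreover have "real (nat (a div g)) = real_of_int a / real_of_int g"
      proof -
        have "a = g * (a div g)" using gdvd[OF that] by simp
        then have "real_of_int a = real_of_int g * real_of_int (a div g)" by (metis of_int_mult)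
        then show ?thesis using gpos that qpos[OF that] by auto
      qed
      ultimately show ?thesis unfolding x_def using Cb[of "nat (a div g)" N] bnd that qpos[OF that]
        unfolding g_def by auto
    qed
    have key: "Pr \<subseteq> (\<Union>a\<in>A0. F a)"
    proof
      fix p assume pP: "p \<in> Pr"
      show "p \<in> (\<Union>a\<in>A0. F a)"
      proof (rule ccontr)
        assume nP: "p \<notin> (\<Union>a\<in>A0. F a)"
        have pr: "prime p" and px: "real p \<ge> x" and pd: "p dvd (\<Prod>a\<in>A. nat (a div g))"
          using pP unfolding Pr_def by (auto simp: in_prime_factors_iff)
        have pri: "prime_elem (int p)" using pr by simp
        have AN: "A \<noteq> {}"
        proof
          assume "A = {}" with pd pr show False by (simp add: prime_factors_dvd)
        qed
        then have g0: "g > 0" by (rule gpos)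
        define f where "f z = real (multiplicity (int p) z)" for z
        define \<nu> where "\<nu> = real (multiplicity (int p) g)"
        have ma: "multiplicity (int p) a = multiplicity (int p) g + multiplicity (int p) (a div g)"
          if "a \<in> A" for a
        proof -
          have "a = g * (a div g)" using gdvd[OF that] by simp
          then have "multiplicity (int p) a = multiplicity (int p) (g * (a div g))" by simp
          also have "\<dots> = multiplicity (int p) g + multiplicity (int p) (a div g)"
            using pri g0 qpos[OF that] by (intro prime_elem_multiplicity_mult_distrib) auto
          finally show ?thesis .
        qed
        have mf: "real (multiplicity (int p) a) = f (fst (ends a)) + f (snd (ends a))"
          if "a \<in> A" for a
        proof -
          have e: "a = fst (ends a) * snd (ends a)" using ends[OF that] by blast
          have "a \<noteq> 0" using pos that by auto
          then have "fst (ends a) \<noteq> 0" "snd (ends a) \<noteq> 0" using e by auto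
          then have "multiplicity (int p) a = multiplicity (int p) (fst (ends a)) + multiplicity (int p) (snd (ends a))"
            using pri e by (metis prime_elem_multiplicity_mult_distrib)
          then show ?thesis unfolding f_def by simp
        qed
        have dv: "p dvd nat (a div g) \<longleftrightarrow> multiplicity (int p) (a div g) > 0" if "a \<in> A" for a
        proof -
          have "p dvd nat (a div g) \<longleftrightarrow> int p dvd int (nat (a div g))" by (rule int_dvd_int_iff[symmetric])
          also have "\<dots> \<longleftrightarrow> int p dvd a div g" using qpos[OF that] by simp
          also have "\<dots> \<longleftrightarrow> multiplicity (int p) (a div g) > 0"
            using pri qpos[OF that] by (simp add: prime_multiplicity_gt_zero_iff)
          finally show ?thesis .
        qed
        have "\<forall>e\<in>A0. f (fst (ends e)) + f (snd (ends e)) = \<nu>"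
        proof
          fix a assume a0: "a \<in> A0"
          then have aA: "a \<in> A" using A0 by auto
          have "p \<notin> F a" using nP a0 by auto
          then have "\<not> p dvd nat (a div g)" using pr px qpos[OF aA] unfolding F_def
            by (auto simp: in_prime_factors_iff)
          then have "multiplicity (int p) (a div g) = 0" using dv[OF aA] by simp
          then show "f (fst (ends a)) + f (snd (ends a)) = \<nu>"
            using ma[OF aA] mf[OF aA] unfolding \<nu>_def by simp
        qed
        then have all: "\<forall>e\<in>A. f (fst (ends e)) + f (snd (ends e)) = \<nu>" by (rule tight)
        have "\<not> p dvd nat (a div g)" if aA: "a \<in> A" for a
        proof -
          have "real (multiplicity (int p) a) = \<nu>" using all mf[OF aA] aA by auto
          then have "multiplicity (int p) a = multiplicity (int p) g" unfolding \<nu>_def by simp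
          then have "multiplicity (int p) (a div g) = 0" using ma[OF aA] by simp
          then show ?thesis using dv[OF aA] by simp
        qed
        moreover have "\<exists>a\<in>A. p dvd nat (a div g)" using pd pr fA by (simp add: prime_dvd_prod_iff)
        ultimately show False by blast
      qed
    qed
    have "real (card Pr) \<le> real (card (\<Union>a\<in>A0. F a))"
      using key A0(3) by (simp add: card_mono F_def)
    also have "\<dots> \<le> real (\<Sum>a\<in>A0. card (F a))" using card_UN_le[OF A0(3), of F] by (simp only: of_nat_le_iff)
    also have "\<dots> = (\<Sum>a\<in>A0. real (card (F a)))" by simp
    also have "\<dots> \<le> (\<Sum>a\<in>A0. C)" using Fb A0(1) by (intro sum_mono) auto
    also have "\<dots> = real (card A0) * C" by simp
    also have "\<dots> \<le> real (card B) * C" using A0(2) C0 by (simp add: mult_right_mono)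
    finally have "real (card Pr) \<le> real (card B) * C" .
    moreover have "M \<le> real (card Pr)" using om unfolding Pr_def omega_def g_def x_def by simp
    ultimately have "M \<le> real (card B) * C" by linarith
    then show "1 / C * M \<le> real (card B)" using C0 by (simp add: field_simps)
  qed
qed

end
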